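(* Let $Y$ be a finite connected simple undirected graph and $e=\{v,w\}$ a cycle-edge of $Y$. If $O^1,O^2\in\mathsf{Acyc}(Y)$ are $\kappa$-equivalent and $v\leq_{O^1}w$ and $v\leq_{O^2}w$, then $\mathcal{I}(O^1)=\mathcal{I}(O^2)$; that is, the same vertices lie on directed paths from $v$ to $w$ in $O^1$ and in $O^2$, and the induced subdigraphs of $O^1$ and $O^2$ on this vertex set coincide. Hence $\mathcal{I}^*([O]):=\mathcal{I}(O^1)$ for any $O^1\in[O]$ with $\mathcal{I}(O^1)\neq\varnothing$ is a well-defined map on $\mathsf{Acyc}(Y)/\!\sim_\kappa$.
   Context: A cycle-edge is an edge whose removal does not increase the number of connected components. $\mathsf{Acyc}(Y)$ is the set of acyclic orientations; an acyclic orientation $O$ induces a partial order $\leq_O$ on vertices with $i\leq_O j$ iff there is a directed path from $i$ to $j$. $\mathcal{I}(O)$ is the interval $[v,w]=\{a: v\leq_O a\leq_O w\}$ (with the induced orientation) if $v\leq_O w$, and the empty graph otherwise. A click at a source $x$ reverses all edges incident to $x$; two acyclic orientations are $\kappa$-equivalent if one can be transformed into the other by a finite sequence of clicks; $[O]$ is the $\kappa$-class of $O$. *)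

theory Defs
  imports Main
begin

text \<open>A finite simple undirected graph Y = (V, E): E is a symmetric irreflexive
  relation on the vertex set V (each undirected edge {x,y} appears as (x,y) and (y,x)).\<close>
definition simple_graph :: "'a set \<Rightarrow> ('a \<times> 'a) set \<Rightarrow> bool" where
  "simple_graph V E \<longleftrightarrow> finite V \<and> E \<subseteq> V \<times> V \<and> sym E \<and> irrefl E"

definition connected_graph :: "'a set \<Rightarrow> ('a \<times> 'a) set \<Rightarrow> bool" where
  "connected_graph V E \<longleftrightarrow> V \<noteq> {} \<and> (\<forall>x\<in>V. \<forall>y\<in>V. (x, y) \<in> E\<^sup>*)"

definition num_components :: "'a set \<Rightarrow> ('a \<times> 'a) set \<Rightarrow> nat" where
  "num_components V E = card (V // {(x, y). x \<in> V \<and> y \<in> V \<and> (x, y) \<in> E\<^sup>*})"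

definition remove_edge :: "('a \<times> 'a) set \<Rightarrow> 'a \<Rightarrow> 'a \<Rightarrow> ('a \<times> 'a) set" where
  "remove_edge E v w = E - {(v, w), (w, v)}"

definition cycle_edge :: "'a set \<Rightarrow> ('a \<times> 'a) set \<Rightarrow> 'a \<Rightarrow> 'a \<Rightarrow> bool" where
  "cycle_edge V E v w \<longleftrightarrow> (v, w) \<in> E \<and>
     num_components V (remove_edge E v w) \<le> num_components V E"

definition orientation :: "('a \<times> 'a) set \<Rightarrow> ('a \<times> 'a) set \<Rightarrow> bool" where
  "orientation E Or \<longleftrightarrow> Or \<subseteq> E \<and> Or \<union> Or\<inverse> = E \<and> Or \<inter> Or\<inverse> = {}"

definition Acyc :: "('a \<times> 'a) set \<Rightarrow> ('a \<times> 'a) set set" where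
  "Acyc E = {Or. orientation E Or \<and> acyclic Or}"

definition leqO :: "('a \<times> 'a) set \<Rightarrow> 'a \<Rightarrow> 'a \<Rightarrow> bool" where
  "leqO Or i j \<longleftrightarrow> (i, j) \<in> Or\<^sup>*"

definition interval :: "('a \<times> 'a) set \<Rightarrow> 'a \<Rightarrow> 'a \<Rightarrow> 'a set \<times> ('a \<times> 'a) set" where
  "interval Or v w =
     (if leqO Or v w then
        (let A = {a. leqO Or v a \<and> leqO Or a w} in (A, Or \<inter> (A \<times> A)))
      else ({}, {}))"

definition is_source :: "'a set \<Rightarrow> ('a \<times> 'a) set \<Rightarrow> 'a \<Rightarrow> bool" where
  "is_source V Or x \<longleftrightarrow> x \<in> V \<and> (\<forall>y. (y, x) \<notin> Or)"

definition click :: "('a \<times> 'a) set \<Rightarrow> 'a \<Rightarrow> ('a \<times> 'a) set" where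
  "click Or x = {(a, b). (a, b) \<in> Or \<and> a \<noteq> x \<and> b \<noteq> x} \<union> {(b, a). (a, b) \<in> Or \<and> (a = x \<or> b = x)}"

definition click_step :: "'a set \<Rightarrow> ('a \<times> 'a) set \<Rightarrow> ('a \<times> 'a) set \<Rightarrow> ('a \<times> 'a) set \<Rightarrow> bool" where
  "click_step V E Or Or' \<longleftrightarrow> Or \<in> Acyc E \<and> (\<exists>x. is_source V Or x \<and> Or' = click Or x)"

definition kappa_equiv :: "'a set \<Rightarrow> ('a \<times> 'a) set \<Rightarrow> ('a \<times> 'a) set \<Rightarrow> ('a \<times> 'a) set \<Rightarrow> bool" where
  "kappa_equiv V E O1 O2 \<longleftrightarrow> (click_step V E)\<^sup>*\<^sup>* O1 O2"

end

theory Submission imports Defs "HOL-Library.Multiset" begin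

definition cpairs :: "'a list \<Rightarrow> ('a \<times> 'a) list" where
  "cpairs cs = (if cs = [] then [] else zip cs (tl cs) @ [(last cs, hd cs)])"

definition cnt :: "('a \<times> 'a) set \<Rightarrow> 'a list \<Rightarrow> nat" where
  "cnt R cs = size (filter_mset (\<lambda>p. p \<in> R) (mset (cpairs cs)))"

lemma in_tl: "b \<in> set (tl xs) \<Longrightarrow> b \<in> set xs"
  by (cases xs) auto

lemma zip_sub: "set (zip xs (tl xs)) \<subseteq> set xs \<times> set xs"
  by (auto dest: set_zip_leftD set_zip_rightD in_tl)

lemma cpairs_sub: "set (cpairs cs) \<subseteq> set cs \<times> set cs"
  using zip_sub[of cs] by (auto simp: cpairs_def)

lemma zip_snoc: "t \<noteq> [] \<Longrightarrow> zip (t @ [a]) (tl t @ [a]) = zip t (tl t) @ [(last t, a)]"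
proof (induction t)
  case Nil then show ?case by simp
next
  case (Cons b u) then show ?case by (cases u) auto
qed

lemma mset_cpairs_rot1: "mset (cpairs (rotate1 cs)) = mset (cpairs cs)"
proof (cases cs)
  case Nil then show ?thesis by simp
next
  case (Cons a t)
  show ?thesis
  proof (cases "t = []")
    case True then show ?thesis using Cons by simp
  next
    case False
    have "cpairs (t @ [a]) = zip t (tl t) @ [(last t, a)] @ [(a, hd t)]"
      using False zip_snoc[OF False, of a] by (simp add: cpairs_def tl_append2 hd_append)
    moreover have "cpairs (a # t) = (a, hd t) # zip t (tl t) @ [(last t, a)]"
      using False by (cases t) (auto simp: cpairs_def)
    ultimately show ?thesis using Cons by simp
  qed
qed

lemma cnt_rot: "cnt R (rotate n cs) = cnt R cs"
  by (induction n) (simp_all add: cnt_def mset_cpairs_rot1 rotate_Suc)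

lemma set_cpairs_rot: "set (cpairs (rotate n cs)) = set (cpairs cs)"
proof (induction n)
  case 0 then show ?case by simp
next
  case (Suc n) then show ?case
    by (metis mset_cpairs_rot1 rotate_Suc set_mset_mset)
qed

lemma cpairs_cons: "rs \<noteq> [] \<Longrightarrow> cpairs (x # rs) = (x, hd rs) # zip rs (tl rs) @ [(last rs, x)]"
  by (cases rs) (auto simp: cpairs_def)

lemma click_in: "is_source V P x \<Longrightarrow> (a, b) \<in> click P x \<longleftrightarrow>
   (if a = x \<or> b = x then (b, a) \<in> P else (a, b) \<in> P)"
  by (auto simp: click_def is_source_def)

lemma cnt_click:
  assumes "click_step V E P Q" "distinct cs" "length cs \<ge> 2" "set (cpairs cs) \<subseteq> E"
  shows "cnt Q cs = cnt P cs"
proof -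
  from assms(1) obtain x where P: "P \<in> Acyc E" and src: "is_source V P x" and Q: "Q = click P x"
    unfolding click_step_def by blast
  have or: "P \<subseteq> E" "P \<union> P\<inverse> = E" "P \<inter> P\<inverse> = {}" using P by (auto simp: Acyc_def orientation_def)
  have nin: "(y, x) \<notin> P" for y using src by (simp add: is_source_def)
  show ?thesis
  proof (cases "x \<in> set cs")
    case False
    have "\<forall>p \<in> set (cpairs cs). fst p \<noteq> x \<and> snd p \<noteq> x"
      using False cpairs_sub[of cs] by auto
    then have "filter_mset (\<lambda>p. p \<in> Q) (mset (cpairs cs)) = filter_mset (\<lambda>p. p \<in> P) (mset (cpairs cs))"
      by (intro filter_mset_cong) (auto simp: Q click_in[OF src])
    then show ?thesis by (simp add: cnt_def)
  next
    case True
    then obtain ys zs where cs: "cs = ys @ x # zs" by (meson split_list)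
    define rs where "rs = zs @ ys"
    have rot: "rotate (length ys) cs = x # rs" unfolding cs rs_def
      by (simp add: rotate_append)
    have rs: "rs \<noteq> []" using assms(3) cs rs_def by auto
    have d: "distinct (x # rs)" using assms(2) rot by (metis distinct_rotate)
    have E: "set (cpairs (x # rs)) \<subseteq> E" using assms(4) set_cpairs_rot[of "length ys" cs] rot by simp
    have e1: "(x, hd rs) \<in> E" "(last rs, x) \<in> E" using E rs by (auto simp: cpairs_cons)
    have p1: "(x, hd rs) \<in> P" using e1(1) or nin by blast
    have p2: "(x, last rs) \<in> P" using e1(2) or nin by blast
    have q1: "(x, hd rs) \<notin> Q" using nin by (simp add: Q click_in[OF src])
    have q2: "(last rs, x) \<in> Q" using p2 by (simp add: Q click_in[OF src])
    have avoid: "\<forall>p \<in> set (zip rs (tl rs)). fst p \<noteq> x \<and> snd p \<noteq> x"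
      using d zip_sub[of rs] by auto
    then have fe: "filter_mset (\<lambda>p. p \<in> Q) (mset (zip rs (tl rs))) = filter_mset (\<lambda>p. p \<in> P) (mset (zip rs (tl rs)))"
      by (intro filter_mset_cong) (auto simp: Q click_in[OF src])
    have "cnt Q (x # rs) = cnt P (x # rs)"
      unfolding cnt_def cpairs_cons[OF rs] using fe p1 q1 q2 nin by simp
    then show ?thesis using cnt_rot rot by metis
  qed
qed

lemma cnt_kappa:
  assumes "kappa_equiv V E P Q" "distinct cs" "length cs \<ge> 2" "set (cpairs cs) \<subseteq> E"
  shows "cnt Q cs = cnt P cs"
  using assms(1) unfolding kappa_equiv_def
proof (induction rule: rtranclp_induct)
  case base then show ?case by simp
next
  case (step y z) then show ?case using cnt_click[OF step(2) assms(2-4)] by simp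
qed

lemma zip_cons: "q \<noteq> [] \<Longrightarrow> zip (x # q) q = (x, hd q) # zip q (tl q)"
  by (cases q) auto

lemma ext:
  assumes "(x, y) \<in> R\<^sup>*" "p \<noteq> []" "hd p = y" "set (zip p (tl p)) \<subseteq> R"
  shows "\<exists>q. q \<noteq> [] \<and> hd q = x \<and> last q = last p \<and> set (zip q (tl q)) \<subseteq> R \<and>
     set p \<subseteq> set q \<and> set (zip p (tl p)) \<subseteq> set (zip q (tl q))"
  using assms(1)
proof (induction rule: converse_rtrancl_induct)
  case base then show ?case using assms(2-4) by blast
next
  case (step x z)
  then obtain q where q: "q \<noteq> [] \<and> hd q = z \<and> last q = last p \<and> set (zip q (tl q)) \<subseteq> R \<and>
     set p \<subseteq> set q \<and> set (zip p (tl p)) \<subseteq> set (zip q (tl q))" by blast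
  show ?case
    apply (rule exI[of _ "x # q"])
    using q step(1) by (auto simp: zip_cons)
qed

lemma chain_step: "Suc k < length p \<Longrightarrow> (p ! k, p ! Suc k) \<in> set (zip p (tl p))"
  by (auto simp: in_set_conv_nth nth_tl intro!: exI[of _ k])

lemma chain_trancl:
  assumes "set (zip p (tl p)) \<subseteq> R" "i < j" "j < length p"
  shows "(p ! i, p ! j) \<in> R\<^sup>+"
  using assms(2,3)
proof (induction j)
  case 0 then show ?case by simp
next
  case (Suc k)
  have st: "(p ! k, p ! Suc k) \<in> R" using chain_step[of k p] Suc.prems assms(1) by auto
  show ?case
  proof (cases "i = k")
    case True then show ?thesis using st by auto
  next
    case False
    then have "(p ! i, p ! k) \<in> R\<^sup>+" using Suc by auto
    then show ?thesis using st by (meson trancl_into_trancl)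
  qed
qed

lemma chain_rtrancl:
  assumes "set (zip p (tl p)) \<subseteq> R" "i \<le> j" "j < length p"
  shows "(p ! i, p ! j) \<in> R\<^sup>*"
  using chain_trancl[OF assms(1) _ assms(3), of i] assms(2)
  by (cases "i = j") (auto dest: trancl_into_rtrancl)

lemma chain_distinct:
  assumes "acyclic R" "set (zip p (tl p)) \<subseteq> R"
  shows "distinct p"
proof -
  have "p ! i \<noteq> p ! j" if "i < j" "j < length p" for i j
    using chain_trancl[OF assms(2) that] assms(1) unfolding acyclic_def by auto
  then show ?thesis unfolding distinct_conv_nth by (metis linorder_neqE_nat)
qed

lemma chain_mem:
  assumes "set (zip p (tl p)) \<subseteq> R" "p \<noteq> []" "a \<in> set p"
  shows "(hd p, a) \<in> R\<^sup>* \<and> (a, last p) \<in> R\<^sup>*"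
proof -
  obtain i where i: "i < length p" "a = p ! i" using assms(3) by (auto simp: in_set_conv_nth)
  have "(p ! 0, p ! i) \<in> R\<^sup>*" by (rule chain_rtrancl[OF assms(1)]) (use i in auto)
  moreover have "(p ! i, p ! (length p - 1)) \<in> R\<^sup>*" by (rule chain_rtrancl[OF assms(1)]) (use i in auto)
  ultimately show ?thesis using i assms(2) by (simp add: hd_conv_nth last_conv_nth)
qed

lemma cnt_chain:
  assumes "orientation E R" "(v, w) \<in> R" "q \<noteq> []" "hd q = v" "last q = w"
  shows "set (zip q (tl q)) \<subseteq> R \<longleftrightarrow> cnt R q = length q - 1"
proof -
  have wv: "(w, v) \<notin> R" using assms(1,2) by (auto simp: orientation_def)
  have c: "cnt R q = length (filter (\<lambda>p. p \<in> R) (zip q (tl q)))"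
    using assms(3-5) wv unfolding cnt_def cpairs_def by (simp flip: mset_filter)
  have l: "length (zip q (tl q)) = length q - 1" by simp
  show ?thesis
  proof
    assume "set (zip q (tl q)) \<subseteq> R"
    then have "filter (\<lambda>p. p \<in> R) (zip q (tl q)) = zip q (tl q)" by (auto intro: filter_True)
    then show "cnt R q = length q - 1" using c l by simp
  next
    assume a: "cnt R q = length q - 1"
    show "set (zip q (tl q)) \<subseteq> R"
    proof (rule ccontr)
      assume "\<not> set (zip q (tl q)) \<subseteq> R"
      then obtain x where "x \<in> set (zip q (tl q))" "\<not> x \<in> R" by blast
      from length_filter_less[of x "zip q (tl q)" "\<lambda>p. p \<in> R", OF this] have "length (filter (\<lambda>p. p \<in> R) (zip q (tl q))) < length q - 1"
        using l by simp
      then show False using a c by simp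
    qed
  qed
qed

lemma transfer:
  assumes oa: "orientation E Oa" and ob: "orientation E Ob" and ac: "acyclic Oa"
    and vw: "(v, w) \<in> Oa" "(v, w) \<in> Ob" and sy: "sym E" and ne: "v \<noteq> w"
    and H: "\<And>q. distinct q \<Longrightarrow> 2 \<le> length q \<Longrightarrow> set (cpairs q) \<subseteq> E \<Longrightarrow> cnt Ob q = cnt Oa q"
    and q: "q \<noteq> []" "hd q = v" "last q = w" "set (zip q (tl q)) \<subseteq> Oa"
  shows "set (zip q (tl q)) \<subseteq> Ob"
proof -
  have d: "distinct q" using chain_distinct[OF ac q(4)] .
  have len: "2 \<le> length q"
    using q ne by (cases q; cases "tl q") auto
  have oaE: "Oa \<subseteq> E" using oa by (auto simp: orientation_def)
  have "(w, v) \<in> E" using vw(1) oaE sy by (auto dest: symD)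
  then have E: "set (cpairs q) \<subseteq> E" using q oaE by (auto simp: cpairs_def)
  have "cnt Oa q = length q - 1" using cnt_chain[OF oa vw(1) q(1-3)] q(4) by simp
  then have "cnt Ob q = length q - 1" using H[OF d len E] by simp
  then show ?thesis using cnt_chain[OF ob vw(2) q(1-3)] by simp
qed

lemma transfer2:
  assumes oa: "orientation E Oa" and ob: "orientation E Ob" and ac: "acyclic Oa"
    and vw: "(v, w) \<in> Oa" "(v, w) \<in> Ob" and sy: "sym E" and ne: "v \<noteq> w"
    and H: "\<And>q. distinct q \<Longrightarrow> 2 \<le> length q \<Longrightarrow> set (cpairs q) \<subseteq> E \<Longrightarrow> cnt Ob q = cnt Oa q"
  shows "\<And>a. (v, a) \<in> Oa\<^sup>* \<Longrightarrow> (a, w) \<in> Oa\<^sup>* \<Longrightarrow> (v, a) \<in> Ob\<^sup>* \<and> (a, w) \<in> Ob\<^sup>*"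
    and "\<And>a b. (v, a) \<in> Oa\<^sup>* \<Longrightarrow> (a, b) \<in> Oa \<Longrightarrow> (b, w) \<in> Oa\<^sup>* \<Longrightarrow> (a, b) \<in> Ob"
proof -
  fix a assume 1: "(v, a) \<in> Oa\<^sup>*" and 2: "(a, w) \<in> Oa\<^sup>*"
  obtain p where p: "p \<noteq> [] \<and> hd p = a \<and> last p = last [w] \<and> set (zip p (tl p)) \<subseteq> Oa \<and>
     set [w] \<subseteq> set p \<and> set (zip [w] (tl [w])) \<subseteq> set (zip p (tl p))"
    using ext[OF 2, of "[w]"] by auto
  obtain q where q: "q \<noteq> [] \<and> hd q = v \<and> last q = last p \<and> set (zip q (tl q)) \<subseteq> Oa \<and>
     set p \<subseteq> set q \<and> set (zip p (tl p)) \<subseteq> set (zip q (tl q))"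
    using ext[OF 1, of p] p by auto
  have aq: "a \<in> set q" using p q by (cases p) auto
  have "set (zip q (tl q)) \<subseteq> Ob"
    using transfer[OF oa ob ac vw sy ne H] q p by auto
  then show "(v, a) \<in> Ob\<^sup>* \<and> (a, w) \<in> Ob\<^sup>*" using chain_mem[OF _ _ aq] q p by auto
next
  fix a b assume 1: "(v, a) \<in> Oa\<^sup>*" and ab: "(a, b) \<in> Oa" and 2: "(b, w) \<in> Oa\<^sup>*"
  obtain p where p: "p \<noteq> [] \<and> hd p = b \<and> last p = last [w] \<and> set (zip p (tl p)) \<subseteq> Oa \<and>
     set [w] \<subseteq> set p \<and> set (zip [w] (tl [w])) \<subseteq> set (zip p (tl p))"
    using ext[OF 2, of "[w]"] by auto
  have 3: "(a, b) \<in> Oa\<^sup>*" using ab by auto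
  have "\<exists>p2. p2 \<noteq> [] \<and> hd p2 = a \<and> last p2 = last p \<and> set (zip p2 (tl p2)) \<subseteq> Oa \<and>
     set p \<subseteq> set p2 \<and> set (zip p (tl p)) \<subseteq> set (zip p2 (tl p2)) \<and> (a, b) \<in> set (zip p2 (tl p2))"
    apply (rule exI[of _ "a # p"]) using p ab by (auto simp: zip_cons)
  then obtain p2 where p2: "p2 \<noteq> [] \<and> hd p2 = a \<and> last p2 = last p \<and> set (zip p2 (tl p2)) \<subseteq> Oa \<and>
     set p \<subseteq> set p2 \<and> set (zip p (tl p)) \<subseteq> set (zip p2 (tl p2))" and abp: "(a, b) \<in> set (zip p2 (tl p2))" by blast
  obtain q where q: "q \<noteq> [] \<and> hd q = v \<and> last q = last p2 \<and> set (zip q (tl q)) \<subseteq> Oa \<and>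
     set p2 \<subseteq> set q \<and> set (zip p2 (tl p2)) \<subseteq> set (zip q (tl q))"
    using ext[OF 1, of p2] p2 by auto
  have "set (zip q (tl q)) \<subseteq> Ob"
    using transfer[OF oa ob ac vw sy ne H] q p2 p by auto
  then show "(a, b) \<in> Ob" using abp q by auto
qed

theorem proposition5:
  fixes V :: "'a set" and E :: "('a \<times> 'a) set" and v w :: 'a
    and O1 O2 :: "('a \<times> 'a) set"
  assumes "simple_graph V E"
    and "connected_graph V E"
    and "cycle_edge V E v w"
    and "O1 \<in> Acyc E" and "O2 \<in> Acyc E"
    and "kappa_equiv V E O1 O2"
    and "leqO O1 v w" and "leqO O2 v w"
  shows "interval O1 v w = interval O2 v w"
proof -
  have sg: "sym E" "irrefl E" using assms(1) by (auto simp: simple_graph_def)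
  have vwE: "(v, w) \<in> E" using assms(3) by (simp add: cycle_edge_def)
  have ne: "v \<noteq> w" using vwE sg(2) by (auto simp: irrefl_def)
  have o1: "orientation E O1" "acyclic O1" and o2: "orientation E O2" "acyclic O2"
    using assms(4,5) by (auto simp: Acyc_def)
  have dir: "(v, w) \<in> R" if "orientation E R" "acyclic R" "(v, w) \<in> R\<^sup>*" for R
  proof (rule ccontr)
    assume "(v, w) \<notin> R"
    then have "(w, v) \<in> R" using that(1) vwE by (auto simp: orientation_def)
    then have "(w, w) \<in> R\<^sup>+" using that(3) by (meson rtrancl_into_trancl2)
    then show False using that(2) by (auto simp: acyclic_def)
  qed
  have d1: "(v, w) \<in> O1" using dir[OF o1] assms(7) by (simp add: leqO_def)
  have d2: "(v, w) \<in> O2" using dir[OF o2] assms(8) by (simp add: leqO_def)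
  have H12: "cnt O2 q = cnt O1 q" if "distinct q" "2 \<le> length q" "set (cpairs q) \<subseteq> E" for q
    using cnt_kappa[OF assms(6) that] .
  have H21: "cnt O1 q = cnt O2 q" if "distinct q" "2 \<le> length q" "set (cpairs q) \<subseteq> E" for q
    using cnt_kappa[OF assms(6) that] by simp
  note T12 = transfer2[OF o1(1) o2(1) o1(2) d1 d2 sg(1) ne H12]
  note T21 = transfer2[OF o2(1) o1(1) o2(2) d2 d1 sg(1) ne H21]
  define A1 where "A1 = {a. leqO O1 v a \<and> leqO O1 a w}"
  define A2 where "A2 = {a. leqO O2 v a \<and> leqO O2 a w}"
  have A: "A1 = A2" unfolding A1_def A2_def leqO_def using T12(1) T21(1) by blast
  have B: "O1 \<inter> (A1 \<times> A1) = O2 \<inter> (A2 \<times> A2)"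
    unfolding A[symmetric] proof (intro equalityI subsetI)
    fix p assume "p \<in> O1 \<inter> (A1 \<times> A1)"
    then obtain a b where "p = (a, b)" "(a, b) \<in> O1" "a \<in> A1" "b \<in> A1" by auto
    then show "p \<in> O2 \<inter> (A1 \<times> A1)" using T12(2)[of a b] unfolding A1_def leqO_def by auto
  next
    fix p assume "p \<in> O2 \<inter> (A1 \<times> A1)"
    then obtain a b where "p = (a, b)" "(a, b) \<in> O2" "a \<in> A2" "b \<in> A2" using A by auto
    then show "p \<in> O1 \<inter> (A1 \<times> A1)" using T21(2)[of a b] A unfolding A2_def leqO_def by auto
  qed
  show ?thesis unfolding interval_def using assms(7,8) A B
    by (simp add: Let_def A1_def A2_def)
qed

end
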